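(* Let $\zeta_5$ be a primitive $5$-th root of unity. (1) $\left\{J_{\frac rs}(\zeta_5) : \tfrac rs>1\right\}=\{0,\ c,\ (\zeta_5-1)c,\ (\zeta_5^2+1)c : c=\pm\zeta_5^j,\ j=0,1,\dots,4\}$. (2) For an irreducible fraction $\frac rs>1$, $J_{\frac rs}(\zeta_5)=0$ if and only if $r\in 5\mathbb{Z}$ and $s\equiv 2$ or $3\pmod 5$.
   Context: Let $q$ be a formal parameter, $R_q=\begin{pmatrix} q & 1\\ 0 & 1\end{pmatrix}$, $S_q=\begin{pmatrix} 0 & -q^{-1}\\ 1 & 0\end{pmatrix}$, and for integers $c_1,\dots,c_k$ put $M_q(c_1,\dots,c_k)=R_q^{c_1}S_q\cdots R_q^{c_k}S_q$. Every irreducible fraction $\frac{r}{s}>1$ has a unique negative continued fraction expansion $\frac{r}{s}=c_1-\cfrac{1}{c_2-\cfrac{1}{\ddots-\cfrac{1}{c_k}}}$ with all $c_i\ge 2$; define $\mathcal{R}_{\frac rs}(q),\mathcal{S}_{\frac rs}(q)$ by $M_q(c_1,\dots,c_k)=\begin{pmatrix}\mathcal{R}_{\frac rs}(q) & *\\ \mathcal{S}_{\frac rs}(q) & *\end{pmatrix}$. Define $J_{\frac rs}(q)=q\,\mathcal{R}_{\frac rs}(q)+(1-q)\,\mathcal{S}_{\frac rs}(q)$; this is the normalized Jones polynomial of the rational (2-bridge) link $L(\frac rs)$, i.e. $\pm t^{-h}V_{L(r/s)}(t)|_{t=-q^{-1}}$ where $V$ is the Jones polynomial and $\pm t^h$ its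 leading term. *)

theory Defs
  imports "HOL-Analysis.Analysis"
begin

text \<open>2x2 complex matrices as complex^2^2. The formal parameter q is specialised to a
nonzero complex number (evaluation commutes with the matrix products).\<close>

definition Rq :: "complex \<Rightarrow> complex^2^2" where
  "Rq q = vector [vector [q, 1], vector [0, 1]]"

definition Sq :: "complex \<Rightarrow> complex^2^2" where
  "Sq q = vector [vector [0, - inverse q], vector [1, 0]]"

definition mpow :: "complex^2^2 \<Rightarrow> nat \<Rightarrow> complex^2^2" where
  "mpow A n = ((\<lambda>B. A ** B) ^^ n) (mat 1)"

text \<open>M_q(c_1,...,c_k) = R^{c_1} S ... R^{c_k} S (all c_i \<ge> 2 in our use, so nat powers).\<close>
definition Mq :: "complex \<Rightarrow> int list \<Rightarrow> complex^2^2" where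
  "Mq q cs = foldr (\<lambda>c A. mpow (Rq q) (nat c) ** Sq q ** A) cs (mat 1)"

fun ncf_val :: "int list \<Rightarrow> rat" where
  "ncf_val [] = 0"
| "ncf_val [c] = of_int c"
| "ncf_val (c # d # cs) = of_int c - 1 / ncf_val (d # cs)"

definition ncf :: "rat \<Rightarrow> int list" where
  "ncf x = (THE cs. cs \<noteq> [] \<and> (\<forall>c\<in>set cs. c \<ge> 2) \<and> ncf_val cs = x)"

definition calR :: "rat \<Rightarrow> complex \<Rightarrow> complex" where
  "calR x q = Mq q (ncf x) $ 1 $ 1"

definition calS :: "rat \<Rightarrow> complex \<Rightarrow> complex" where
  "calS x q = Mq q (ncf x) $ 2 $ 1"

definition Jones :: "rat \<Rightarrow> complex \<Rightarrow> complex" where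
  "Jones x q = q * calR x q + (1 - q) * calS x q"

end

theory Submission
  imports Defs
begin


datatype zz = Z int int int int

fun zadd :: "zz \<Rightarrow> zz \<Rightarrow> zz" where
  "zadd (Z a0 a1 a2 a3) (Z b0 b1 b2 b3) = Z (a0+b0) (a1+b1) (a2+b2) (a3+b3)"
fun zneg :: "zz \<Rightarrow> zz" where
  "zneg (Z a0 a1 a2 a3) = Z (-a0) (-a1) (-a2) (-a3)"
fun zmul :: "zz \<Rightarrow> zz \<Rightarrow> zz" where
  "zmul (Z a0 a1 a2 a3) (Z b0 b1 b2 b3) =
    (let p0 = a0*b0; p1 = a0*b1+a1*b0; p2 = a0*b2+a1*b1+a2*b0;
         p3 = a0*b3+a1*b2+a2*b1+a3*b0; p4 = a1*b3+a2*b2+a3*b1;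
         p5 = a2*b3+a3*b2; p6 = a3*b3
     in Z (p0+p5-p4) (p1+p6-p4) (p2-p4) (p3-p4))"
fun emb :: "complex \<Rightarrow> zz \<Rightarrow> complex" where
  "emb z (Z a0 a1 a2 a3) = of_int a0 + of_int a1 * z + of_int a2 * z^2 + of_int a3 * z^3"
fun red :: "zz \<Rightarrow> int" where
  "red (Z a0 a1 a2 a3) = a0+a1+a2+a3"

lemma emb_add: "emb z (zadd a b) = emb z a + emb z b"
  by (cases a; cases b) (simp add: algebra_simps)
lemma emb_neg: "emb z (zneg a) = - emb z a"
  by (cases a) (simp add: algebra_simps)

lemma emb_mul:
  assumes "z^4+z^3+z^2+z+1 = 0"
  shows "emb z (zmul a b) = emb z a * emb z b"
proof (cases a; cases b)
  fix a0 a1 a2 a3 b0 b1 b2 b3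
  assume a: "a = Z a0 a1 a2 a3" and b: "b = Z b0 b1 b2 b3"
  have "emb z a * emb z b - emb z (zmul a b) =
     (of_int (a3*b3) * z^2 + of_int (a2*b3+a3*b2 - a3*b3) * z + of_int (a1*b3+a2*b2+a3*b1 - (a2*b3+a3*b2))) * (z^4+z^3+z^2+z+1)"
    unfolding a b by (simp add: Let_def algebra_simps power2_eq_square power3_eq_cube power4_eq_xxxx)
  then show ?thesis using assms by simp
qed

lemma red_add: "red (zadd a b) = red a + red b"
  by (cases a; cases b) simp
lemma red_neg: "red (zneg a) = - red a"
  by (cases a) simp
lemma red_mul: "\<exists>t. red (zmul a b) = red a * red b - 5 * t"
proof (cases a; cases b)
  fix a0 a1 a2 a3 b0 b1 b2 b3
  assume a: "a = Z a0 a1 a2 a3" and b: "b = Z b0 b1 b2 b3"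
  show ?thesis unfolding a b
    by (rule exI[where x="a1*b3+a2*b2+a3*b1"]) (simp add: Let_def algebra_simps)
qed



definition pwZ :: "nat \<Rightarrow> zz" where
  "pwZ k = [Z 1 0 0 0, Z 0 1 0 0, Z 0 0 1 0, Z 0 0 0 1, Z (-1) (-1) (-1) (-1)] ! (k mod 5)"
definition hZ :: "nat \<Rightarrow> zz" where
  "hZ k = [Z 0 0 0 0, Z 1 0 0 0, Z 1 1 0 0, Z 1 1 1 0, Z 1 1 1 1] ! (k mod 5)"
definition stepZ :: "nat \<Rightarrow> zz \<times> zz \<Rightarrow> zz \<times> zz" where
  "stepZ k v = (zadd (zmul (hZ k) (fst v)) (zneg (zmul (pwZ (k+4)) (snd v))), fst v)"
definition colZ :: "int list \<Rightarrow> zz \<times> zz" where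
  "colZ cs = foldr (\<lambda>c v. stepZ (nat c) v) cs (Z 1 0 0 0, Z 0 0 0 0)"
definition jZ :: "zz \<times> zz \<Rightarrow> zz" where
  "jZ v = zadd (zmul (Z 0 1 0 0) (fst v)) (zmul (Z 1 (-1) 0 0) (snd v))"
definition mZ :: "nat \<Rightarrow> zz" where
  "mZ k = (if k = 0 then Z 1 0 0 0 else if k = 1 then Z (-1) 1 0 0 else Z 1 0 1 0)"
definition formZ :: "nat \<times> bool \<times> nat \<Rightarrow> zz" where
  "formZ f = (case f of (k, sg, j) \<Rightarrow> (if sg then zmul (mZ k) (pwZ j) else zneg (zmul (mZ k) (pwZ j))))"
definition FL :: "(nat \<times> bool \<times> nat) list" where
  "FL = [(k, sg, j). k \<leftarrow> [0,1,2], sg \<leftarrow> [True, False], j \<leftarrow> [0..<5]]"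
definition cnd :: "zz \<times> zz \<Rightarrow> bool" where
  "cnd v = (red (fst v) mod 5 = 0 \<and> (red (snd v) mod 5 = 2 \<or> red (snd v) mod 5 = 3))"

definition orbL :: "(zz * zz) list" where "orbL = [(Z (1) (0) (0) (0), Z (0) (0) (0) (0)), (Z (0) (0) (0) (0), Z (1) (0) (0) (0)), (Z (1) (0) (0) (0), Z (1) (0) (0) (0)), (Z (1) (1) (0) (0), Z (1) (0) (0) (0)), (Z (1) (1) (1) (0), Z (1) (0) (0) (0)), (Z (1) (1) (1) (1), Z (1) (0) (0) (0)), (Z (1) (1) (1) (1), Z (0) (0) (0) (0)), (Z (-1) (0) (0) (0), Z (0) (0) (0) (0)), (Z (0) (-1) (0) (0), Z (0) (0) (0) (0)), (Z (0) (0) (-1) (0), Z (0) (0) (0) (0)), (Z (0) (0) (0) (-1), Z (0) (0) (0) (0)), (Z (1) (1) (1) (1), Z (1) (1) (0) (0)), (Z (0) (1) (0) (0), Z (1) (1) (0) (0)), (Z (1) (1) (1) (0), Z (1) (1) (0) (0)), (Z (1) (2) (1) (1), Z (1) (1) (0) (0)), (Z (0) (1) (1) (0), Z (1) (1) (0) (0)), (Z (1) (1) (1) (1), Z (1) (1) (1) (0)), (Z (0) (1) (1) (0), Z (1) (1) (1) (0)), (Z (1) (1) (2) (1), Z (1) (1) (1) (0)), (Z (0) (1) (1) (1), Z (1) (1) (1) (0)), (Z (0) (0) (1) (0), Z (1) (1) (1) (0)), (Z (1) (1) (1) (1), Z (1) (1) (1) (1)), (Z (0) (1) (1) (1), Z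 (1) (1) (1) (1)), (Z (0) (0) (1) (1), Z (1) (1) (1) (1)), (Z (0) (0) (0) (1), Z (1) (1) (1) (1)), (Z (0) (0) (0) (0), Z (1) (1) (1) (1)), (Z (0) (0) (0) (0), Z (-1) (0) (0) (0)), (Z (-1) (0) (0) (0), Z (-1) (0) (0) (0)), (Z (-1) (-1) (0) (0), Z (-1) (0) (0) (0)), (Z (-1) (-1) (-1) (0), Z (-1) (0) (0) (0)), (Z (-1) (-1) (-1) (-1), Z (-1) (0) (0) (0)), (Z (0) (0) (0) (0), Z (0) (-1) (0) (0)), (Z (0) (-1) (0) (0), Z (0) (-1) (0) (0)), (Z (0) (-1) (-1) (0), Z (0) (-1) (0) (0)), (Z (0) (-1) (-1) (-1), Z (0) (-1) (0) (0)), (Z (1) (0) (0) (0), Z (0) (-1) (0) (0)), (Z (0) (0) (0) (0), Z (0) (0) (-1) (0)), (Z (0) (0) (-1) (0), Z (0) (0) (-1) (0)), (Z (0) (0) (-1) (-1), Z (0) (0) (-1) (0)), (Z (1) (1) (0) (0), Z (0) (0) (-1) (0)), (Z (0) (1) (0) (0), Z (0) (0) (-1) (0)), (Z (0) (0) (0) (0), Z (0) (0) (0) (-1)), (Z (0) (0) (0) (-1), Z (0) (0) (0) (-1)), (Z (1) (1) (1) (0), Z (0) (0) (0) (-1)), (Z (0) (1) (1) (0), Z (0) (0) (0) (-1)), (Z (0) (0) (1) (0), Z (0) (0) (0) (-1)), (Z (0) (1) (1) (1), Z (0) (1) (0) (0)), (Z (-1) (0) (0) (0), Z (0) (1) (0)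 (0)), (Z (0) (0) (0) (0), Z (0) (1) (0) (0)), (Z (0) (1) (0) (0), Z (0) (1) (0) (0)), (Z (0) (1) (1) (0), Z (0) (1) (0) (0)), (Z (0) (1) (1) (1), Z (1) (2) (1) (1)), (Z (0) (1) (1) (1), Z (0) (1) (1) (0)), (Z (-1) (0) (1) (0), Z (0) (1) (1) (0)), (Z (0) (0) (1) (1), Z (0) (1) (1) (0)), (Z (-1) (0) (0) (0), Z (0) (1) (1) (0)), (Z (0) (0) (1) (0), Z (0) (1) (1) (0)), (Z (0) (0) (1) (1), Z (1) (1) (2) (1)), (Z (0) (0) (1) (1), Z (0) (1) (1) (1)), (Z (-1) (0) (0) (1), Z (0) (1) (1) (1)), (Z (-1) (-1) (0) (0), Z (0) (1) (1) (1)), (Z (0) (0) (0) (1), Z (0) (1) (1) (1)), (Z (-1) (0) (0) (0), Z (0) (1) (1) (1)), (Z (0) (0) (1) (1), Z (0) (0) (1) (0)), (Z (-1) (-1) (0) (0), Z (0) (0) (1) (0)), (Z (0) (-1) (0) (0), Z (0) (0) (1) (0)), (Z (0) (0) (0) (0), Z (0) (0) (1) (0)), (Z (0) (0) (1) (0), Z (0) (0) (1) (0)), (Z (0) (0) (0) (1), Z (0) (0) (1) (1)), (Z (-1) (-1) (0) (0), Z (0) (0) (1) (1)), (Z (0) (-1) (0) (1), Z (0) (0) (1) (1)), (Z (-1) (-1) (-1) (0), Z (0) (0) (1) (1)), (Z (0) (-1) (0) (0), Z (0) (0) (1) (1)), (Z (0) (0) (0) (1), Z (0) (0) (0) (1)),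 (Z (-1) (-1) (-1) (0), Z (0) (0) (0) (1)), (Z (0) (-1) (-1) (0), Z (0) (0) (0) (1)), (Z (0) (0) (-1) (0), Z (0) (0) (0) (1)), (Z (0) (0) (0) (0), Z (0) (0) (0) (1)), (Z (0) (0) (0) (1), Z (0) (0) (0) (0)), (Z (-1) (-1) (-1) (-1), Z (0) (0) (0) (0)), (Z (0) (1) (0) (0), Z (0) (0) (0) (0)), (Z (0) (0) (1) (0), Z (0) (0) (0) (0)), (Z (-1) (-1) (-1) (-1), Z (-1) (-1) (0) (0)), (Z (0) (-1) (0) (0), Z (-1) (-1) (0) (0)), (Z (-1) (-1) (-1) (0), Z (-1) (-1) (0) (0)), (Z (-1) (-2) (-1) (-1), Z (-1) (-1) (0) (0)), (Z (0) (-1) (-1) (0), Z (-1) (-1) (0) (0)), (Z (-1) (-1) (-1) (-1), Z (-1) (-1) (-1) (0)), (Z (0) (-1) (-1) (0), Z (-1) (-1) (-1) (0)), (Z (-1) (-1) (-2) (-1), Z (-1) (-1) (-1) (0)), (Z (0) (-1) (-1) (-1), Z (-1) (-1) (-1) (0)), (Z (0) (0) (-1) (0), Z (-1) (-1) (-1) (0)), (Z (-1) (-1) (-1) (-1), Z (-1) (-1) (-1) (-1)), (Z (0) (-1) (-1) (-1), Z (-1) (-1) (-1) (-1)), (Z (0) (0) (-1) (-1), Z (-1) (-1) (-1) (-1)), (Z (0) (0) (0) (-1), Z (-1) (-1) (-1) (-1)), (Z (0) (0) (0) (0), Z (-1) (-1) (-1) (-1)), (Z (1) (0) (0) (0), Z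 (0) (-1) (-1) (0)), (Z (0) (0) (-1) (0), Z (0) (-1) (-1) (0)), (Z (0) (-1) (-1) (-1), Z (0) (-1) (-1) (0)), (Z (1) (0) (-1) (0), Z (0) (-1) (-1) (0)), (Z (0) (0) (-1) (-1), Z (0) (-1) (-1) (0)), (Z (1) (0) (0) (0), Z (0) (-1) (-1) (-1)), (Z (0) (0) (-1) (-1), Z (0) (-1) (-1) (-1)), (Z (1) (0) (0) (-1), Z (0) (-1) (-1) (-1)), (Z (1) (1) (0) (0), Z (0) (-1) (-1) (-1)), (Z (0) (0) (0) (-1), Z (0) (-1) (-1) (-1)), (Z (0) (1) (0) (0), Z (0) (0) (-1) (-1)), (Z (0) (0) (0) (-1), Z (0) (0) (-1) (-1)), (Z (1) (1) (0) (0), Z (0) (0) (-1) (-1)), (Z (0) (1) (0) (-1), Z (0) (0) (-1) (-1)), (Z (1) (1) (1) (0), Z (0) (0) (-1) (-1)), (Z (-1) (-1) (0) (0), Z (-1) (0) (1) (0)), (Z (-1) (-1) (-1) (0), Z (-1) (0) (0) (1)), (Z (0) (-1) (-1) (0), Z (0) (-1) (0) (1)), (Z (0) (-1) (-1) (-1), Z (-1) (-2) (-1) (-1)), (Z (0) (0) (-1) (-1), Z (-1) (-1) (-2) (-1)), (Z (1) (1) (0) (0), Z (1) (0) (-1) (0)), (Z (1) (1) (1) (0), Z (1) (0) (0) (-1)), (Z (0) (1) (1) (0), Z (0) (1) (0) (-1))]"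
definition witL :: "((nat * bool * nat) * int list) list" where "witL = [((0, True, 0), [6]), ((0, True, 1), [2, 4, 4]), ((0, True, 2), [3, 4, 4]), ((0, True, 3), [4, 3, 5]), ((0, True, 4), [4, 4, 5]), ((0, False, 0), [5, 5]), ((0, False, 1), [4]), ((0, False, 2), [2, 5]), ((0, False, 3), [3, 5]), ((0, False, 4), [4, 5]), ((1, True, 0), [5, 6, 5]), ((1, True, 1), [5, 2, 5]), ((1, True, 2), [5, 3, 5]), ((1, True, 3), [5, 4, 5]), ((1, True, 4), [4, 4]), ((1, False, 0), [5]), ((1, False, 1), [2, 6, 2]), ((1, False, 2), [3, 4, 3]), ((1, False, 3), [4, 3, 4]), ((1, False, 4), [4, 4, 6, 5]), ((2, True, 0), [2]), ((2, True, 1), [2, 6, 4]), ((2, True, 2), [3, 4, 5]), ((2, True, 3), [2, 4]), ((2, True, 4), [2, 4, 2]), ((2, False, 0), [2, 6, 5]), ((2, False, 1), [3, 3]), ((2, False, 2), [2, 2]), ((2, False, 3), [2, 4, 5]), ((2, False, 4), [3])]"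

lemma chk1: "list_all (\<lambda>v. list_all (\<lambda>k. stepZ k v \<in> set orbL) [0..<5]) orbL"
  by code_simp

lemma chk2: "list_all (\<lambda>v. if jZ v = Z 0 0 0 0 then cnd v else (\<not> cnd v \<and> jZ v \<in> set (map formZ FL))) orbL"
  by code_simp

lemma chk3: "list_all (\<lambda>(f, cs). cs \<noteq> [] \<and> list_all (\<lambda>c. c \<ge> 2) cs \<and> jZ (colZ cs) = formZ f) witL \<and> map fst witL = FL"
  by code_simp

lemma chk4: "jZ (colZ [3,2]) = Z 0 0 0 0 \<and> Z 1 0 0 0 \<noteq> Z 0 0 0 0 \<and> (Z 1 0 0 0, Z 0 0 0 0) \<in> set orbL"
  by code_simp


lemma mpow_Suc: "mpow A (Suc n) = A ** mpow A n"
  by (simp add: mpow_def)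

lemma Rq_ent: "Rq q $1$1 = q" "Rq q $1$2 = 1" "Rq q $2$1 = 0" "Rq q $2$2 = 1"
  by (simp_all add: Rq_def)
lemma Sq_ent: "Sq q $1$1 = 0" "Sq q $1$2 = - inverse q" "Sq q $2$1 = 1" "Sq q $2$2 = 0"
  by (simp_all add: Sq_def)

lemma mpowR: "mpow (Rq q) n $1$1 = q^n \<and> mpow (Rq q) n $1$2 = (\<Sum>i<n. q^i) \<and>
   mpow (Rq q) n $2$1 = 0 \<and> mpow (Rq q) n $2$2 = 1"
proof (induction n)
  case 0
  then show ?case by (simp add: mpow_def mat_def)
next
  case (Suc n)
  have s: "(\<Sum>i<Suc n. q^i) = 1 + q * (\<Sum>i<n. q^i)"
    by (simp only: sum.lessThan_Suc_shift power_0 power_Suc sum_distrib_left)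
  have e11: "mpow (Rq q) (Suc n) $1$1 = q * mpow (Rq q) n $1$1 + mpow (Rq q) n $2$1"
   and e12: "mpow (Rq q) (Suc n) $1$2 = q * mpow (Rq q) n $1$2 + mpow (Rq q) n $2$2"
   and e21: "mpow (Rq q) (Suc n) $2$1 = mpow (Rq q) n $2$1"
   and e22: "mpow (Rq q) (Suc n) $2$2 = mpow (Rq q) n $2$2"
    by (simp_all add: mpow_Suc matrix_matrix_mult_def sum_2 Rq_ent)
  show ?case unfolding e11 e12 e21 e22 s using Suc by (simp add: add.commute)
qed

lemma Mq_cons: "Mq q (c#cs) = mpow (Rq q) (nat c) ** Sq q ** Mq q cs"
  by (simp add: Mq_def)

lemma Mq_col: "Mq q (c#cs) $1$1 = (\<Sum>i<nat c. q^i) * Mq q cs $1$1 - q^(nat c) * inverse q * Mq q cs $2$1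
   \<and> Mq q (c#cs) $2$1 = Mq q cs $1$1"
  using mpowR[of q "nat c"]
  by (simp add: Mq_cons matrix_matrix_mult_def sum_2 Sq_ent algebra_simps)

lemma Mq_nil: "Mq q [] $1$1 = 1" "Mq q [] $2$1 = 0"
  by (simp_all add: Mq_def mat_def)



locale rt5 =
  fixes z :: complex
  assumes z5: "z^5 = 1" and z1: "z \<noteq> 1"
begin

lemma phi: "z^4+z^3+z^2+z+1 = 0"
proof -
  have "(z - 1) * (z^4+z^3+z^2+z+1) = z^5 - 1"
    by (simp add: algebra_simps power_numeral_reduce)
  then show ?thesis using z5 z1 by simp
qed

lemma z4: "z^4 = -1 - z - z^2 - z^3"
proof -
  have "z^4 = z^4 - (z^4+z^3+z^2+z+1)" using phi by simp
  also have "\<dots> = -1 - z - z^2 - z^3" by simp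
  finally show ?thesis .
qed

lemma powmod: "z^n = z^(n mod 5)"
proof -
  have "z^n = z^(5 * (n div 5) + n mod 5)" by simp
  also have "\<dots> = (z^5)^(n div 5) * z^(n mod 5)" by (subst power_add, subst power_mult, rule refl)
  finally show ?thesis using z5 by simp
qed

lemma mod5_cases: "(n::nat) mod 5 = 0 \<or> n mod 5 = 1 \<or> n mod 5 = 2 \<or> n mod 5 = 3 \<or> n mod 5 = 4"
  by linarith

lemma emb_pw: "emb z (pwZ k) = z^k"
proof -
  have "emb z (pwZ k) = z^(k mod 5)"
    using mod5_cases[of k] z4
    by (auto simp: pwZ_def power2_eq_square power3_eq_cube)
  then show ?thesis using powmod[of k] by simp
qed

lemma gp: "(\<Sum>i<n. z^i) = (1 - z^n) / (1 - z)"
  using z1 by (simp add: sum_gp_strict)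

lemma emb_h: "emb z (hZ k) = (\<Sum>i<k. z^i)"
proof -
  have s4: "(\<Sum>i<4. z^i) = 1 + z + z^2 + z^3"
    by (simp add: numeral_eq_Suc sum.lessThan_Suc)
  have s3: "(\<Sum>i<3. z^i) = 1 + z + z^2"
    by (simp add: numeral_eq_Suc sum.lessThan_Suc)
  have s2: "(\<Sum>i<2. z^i) = 1 + z"
    by (simp add: numeral_eq_Suc sum.lessThan_Suc)
  have "emb z (hZ k) = (\<Sum>i<k mod 5. z^i)"
    using mod5_cases[of k]
    apply (elim disjE)
    apply (simp_all only: hZ_def s4 s3 s2)
    apply simp_all
    done
  also have "\<dots> = (\<Sum>i<k. z^i)" unfolding gp using powmod[of k] by simp
  finally show ?thesis .
qed

lemma inv_z: "inverse z = z^4"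
proof -
  have "z * z^4 = 1" using z5 by (simp add: power_numeral_reduce)
  then show ?thesis by (metis inverse_unique)
qed

lemma emb_mul': "emb z (zmul a b) = emb z a * emb z b"
  using emb_mul[OF phi] .

lemma colM: "Mq z cs $1$1 = emb z (fst (colZ cs)) \<and> Mq z cs $2$1 = emb z (snd (colZ cs))"
proof (induction cs)
  case Nil
  then show ?case by (simp add: Mq_nil colZ_def)
next
  case (Cons c cs)
  have e: "colZ (c#cs) = stepZ (nat c) (colZ cs)" by (simp add: colZ_def)
  show ?case using Cons
    by (simp add: e Mq_col stepZ_def emb_add emb_neg emb_mul' emb_h emb_pw inv_z power_add)
qed

lemma Jones_emb: "Jones x z = emb z (jZ (colZ (ncf x)))"
  using colM[of "ncf x"]
  by (simp add: Jones_def calR_def calS_def jZ_def emb_add emb_mul' algebra_simps)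

end


definition colI :: "int list \<Rightarrow> int \<times> int" where
  "colI cs = foldr (\<lambda>c v. (c * fst v - snd v, fst v)) cs (1, 0)"

definition valid :: "int list \<Rightarrow> bool" where
  "valid cs \<longleftrightarrow> cs \<noteq> [] \<and> (\<forall>c\<in>set cs. c \<ge> 2)"

lemma ncf_val_cons: "ys \<noteq> [] \<Longrightarrow> ncf_val (c#ys) = of_int c - 1 / ncf_val ys"
  by (cases ys) auto

lemma colI_props:
  "valid cs \<Longrightarrow> snd (colI cs) > 0 \<and> fst (colI cs) > snd (colI cs) \<and>
     coprime (fst (colI cs)) (snd (colI cs)) \<and> ncf_val cs = of_int (fst (colI cs)) / of_int (snd (colI cs))"
proof (induction cs)
  case Nil
  then show ?case by (simp add: valid_def)
next
  case (Cons c cs)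
  show ?case
  proof (cases "cs = []")
    case True
    then show ?thesis using Cons.prems by (simp add: valid_def colI_def)
  next
    case False
    have v: "valid cs" and c2: "c \<ge> 2" using Cons.prems False by (auto simp: valid_def)
    obtain r s where rs: "colI cs = (r, s)" by force
    have IH: "s > 0" "r > s" "coprime r s" "ncf_val cs = of_int r / of_int s"
      using Cons.IH[OF v] rs by auto
    have e: "colI (c#cs) = (c * r - s, r)" using rs by (simp add: colI_def)
    have "c * r \<ge> 2 * r" using c2 IH by (intro mult_right_mono) auto
    then have g: "c * r - s > r" using IH by linarith
    have cp: "coprime (c * r - s) r"
    proof -
      have "gcd r (c*r + (-s)) = gcd r (-s)" by (rule gcd_add_mult)
      then have "gcd r (c*r - s) = 1" using IH(3) by (simp add: coprime_iff_gcd_eq_1)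
      then show ?thesis by (simp add: coprime_iff_gcd_eq_1 gcd.commute)
    qed
    have "ncf_val (c#cs) = of_int c - 1 / (of_int r / of_int s)"
      using IH(4) False by (simp add: ncf_val_cons)
    also have "\<dots> = of_int (c*r - s) / of_int r"
      using IH(1,2) by (simp add: field_simps)
    finally have val: "ncf_val (c#cs) = of_int (c*r - s) / of_int r" .
    show ?thesis using e g cp val IH by simp
  qed
qed

lemma gt1: "valid cs \<Longrightarrow> ncf_val cs > 1"
proof -
  assume v: "valid cs"
  obtain r s where rs: "colI cs = (r, s)" by force
  have "s > 0" "r > s" "ncf_val cs = of_int r / of_int s"
    using colI_props[OF v] rs by auto
  then show ?thesis by simp
qed

lemma bounds2:
  assumes "valid (c#d#rest)"
  shows "of_int c - 1 < ncf_val (c#d#rest) \<and> ncf_val (c#d#rest) < of_int c"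
proof -
  have "valid (d#rest)" using assms by (simp add: valid_def)
  then have y: "ncf_val (d#rest) > 1" by (rule gt1)
  then have "0 < 1 / ncf_val (d#rest)" "1 / ncf_val (d#rest) < 1" by auto
  then show ?thesis by simp
qed

lemma ncf_unique: "valid cs \<Longrightarrow> valid ds \<Longrightarrow> ncf_val cs = ncf_val ds \<Longrightarrow> cs = ds"
proof (induction cs arbitrary: ds)
  case Nil
  then show ?case by (simp add: valid_def)
next
  case (Cons c cs)
  obtain c' ds' where ds: "ds = c' # ds'" using Cons.prems(2) by (cases ds) (auto simp: valid_def)
  show ?case
  proof (cases cs)
    case Nil
    show ?thesis
    proof (cases ds')
      case Nil
      then show ?thesis using Cons.prems \<open>cs = []\<close> ds by simp
    next
      case (Cons d' r')
      have "of_int c' - 1 < ncf_val ds \<and> ncf_val ds < (of_int c' :: rat)"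
        using bounds2[of c' d' r'] Cons.prems(2) ds Cons by simp
      then have "of_int c' - 1 < (of_int c :: rat) \<and> (of_int c :: rat) < of_int c'"
        using Cons.prems(3) \<open>cs = []\<close> by simp
      then have "c' - 1 < c \<and> c < c'"
        by (metis of_int_1 of_int_diff of_int_less_iff)
      then show ?thesis by linarith
    qed
  next
    case (Cons d r)
    have b1: "of_int c - 1 < ncf_val (c#cs) \<and> ncf_val (c#cs) < (of_int c :: rat)"
      using bounds2[of c d r] Cons.prems(1) Cons by simp
    show ?thesis
    proof (cases ds')
      case Nil
      have "of_int c - 1 < (of_int c' :: rat) \<and> (of_int c' :: rat) < of_int c"
        using b1 Cons.prems(3) ds Nil by simp
      then have "c - 1 < c' \<and> c' < c"
        by (metis of_int_1 of_int_diff of_int_less_iff)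
      then show ?thesis by linarith
    next
      case (Cons d' r')
      have b2: "of_int c' - 1 < ncf_val ds \<and> ncf_val ds < (of_int c' :: rat)"
        using bounds2[of c' d' r'] Cons.prems(2) ds Cons by simp
      have "of_int c - 1 < (of_int c' :: rat) \<and> (of_int c' :: rat) - 1 < of_int c"
        using b1 b2 Cons.prems(3) by linarith
      then have "c - 1 < c' \<and> c' - 1 < c"
        by (metis of_int_1 of_int_diff of_int_less_iff)
      then have cc: "c = c'" by linarith
      have ne: "cs \<noteq> []" "ds' \<noteq> []" using \<open>cs = d # r\<close> Cons by auto
      have "of_int c - 1 / ncf_val cs = of_int c' - 1 / ncf_val ds'"
        using Cons.prems(3) ds ne by (simp add: ncf_val_cons)
      then have "ncf_val cs = ncf_val ds'" using cc by simp
      moreover have "valid cs" "valid ds'" using Cons.prems(1,2) ds ne by (auto simp: valid_def)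
      ultimately have "cs = ds'" using Cons.IH by blast
      then show ?thesis using cc ds by simp
    qed
  qed
qed

lemma ncf_exists_aux:
  "s > 0 \<Longrightarrow> r > s \<Longrightarrow> \<exists>cs. valid cs \<and> ncf_val cs = of_int r / of_int s"
proof (induction "nat s" arbitrary: r s rule: less_induct)
  case less
  show ?case
  proof (cases "s dvd r")
    case True
    then obtain k where k: "r = s * k" by auto
    have "k > 1" using less.prems k by (metis mult.right_neutral mult_less_cancel_left_pos)
    then show ?thesis using k less.prems
      by (intro exI[where x="[k]"]) (simp add: valid_def)
  next
    case False
    define c where "c = r div s + 1"
    define s' where "s' = c * s - r"
    have rm: "r = s * (r div s) + r mod s" by simp
    have m0: "r mod s > 0" using False less.prems
      by (metis dvd_eq_mod_eq_0 order_le_less pos_mod_sign)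
    have m1: "r mod s < s" using less.prems by simp
    have s'eq: "s' = s - r mod s" unfolding s'_def c_def using rm by (simp add: algebra_simps)
    have "r div s \<ge> 1" using less.prems using pos_imp_zdiv_pos_iff[of s r] by linarith
    then have c2: "c \<ge> 2" unfolding c_def by simp
    have "0 < s'" "s' < s" using s'eq m0 m1 by auto
    then obtain ys where ys: "valid ys" "ncf_val ys = of_int s / of_int s'"
      using less.hyps[of s' s] less.prems by auto
    have ne: "ys \<noteq> []" using ys by (simp add: valid_def)
    have "ncf_val (c#ys) = of_int c - of_int s' / of_int s"
      using ys ne by (simp add: ncf_val_cons)
    also have "\<dots> = of_int r / of_int s"
      using less.prems unfolding s'_def by (simp add: field_simps)
    finally show ?thesis using ys c2 ne
      by (intro exI[where x="c#ys"]) (simp add: valid_def)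
  qed
qed

lemma rat_gt1_rep: "(x::rat) > 1 \<Longrightarrow> \<exists>r s. s > 0 \<and> r > s \<and> coprime r s \<and> x = of_int r / of_int s"
proof -
  assume x: "x > 1"
  obtain r s where rs: "x = Fract r s" "s > 0" "coprime r s" by (cases x) auto
  have "x = of_int r / of_int s" using rs by (simp add: Fract_of_int_quotient)
  moreover have "r > s" using x rs(2) calculation by (simp add: less_divide_eq)
  ultimately show ?thesis using rs by blast
qed

lemma ncf_exists: "(x::rat) > 1 \<Longrightarrow> \<exists>cs. valid cs \<and> ncf_val cs = x"
  using rat_gt1_rep ncf_exists_aux by metis

lemma ncf_spec: "(x::rat) > 1 \<Longrightarrow> valid (ncf x) \<and> ncf_val (ncf x) = x"
proof -
  assume x: "x > 1"
  have "\<exists>!cs. cs \<noteq> [] \<and> (\<forall>c\<in>set cs. c \<ge> 2) \<and> ncf_val cs = x"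
    using ncf_exists[OF x] ncf_unique unfolding valid_def by metis
  from theI'[OF this] show ?thesis unfolding ncf_def valid_def by simp
qed

lemma ncf_eq: "valid cs \<Longrightarrow> ncf (ncf_val cs) = cs"
  unfolding ncf_def
  by (rule the_equality) (auto simp: valid_def intro: ncf_unique[unfolded valid_def])



lemma mod5_cases': "(n::nat) mod 5 = 0 \<or> n mod 5 = 1 \<or> n mod 5 = 2 \<or> n mod 5 = 3 \<or> n mod 5 = 4"
  by linarith

lemma red_h: "red (hZ n) = int (n mod 5)"
  using mod5_cases'[of n] by (auto simp: hZ_def)

lemma red_pw: "5 dvd (red (pwZ k) - 1)"
  using mod5_cases'[of k] by (auto simp: pwZ_def)

lemma stepZ_mod: "stepZ k v = stepZ (k mod 5) v"
  by (simp add: stepZ_def pwZ_def hZ_def mod_add_left_eq)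

lemma colZ_cons: "colZ (c#cs) = stepZ (nat c) (colZ cs)"
  by (simp add: colZ_def)
lemma colI_cons: "colI (c#cs) = (c * fst (colI cs) - snd (colI cs), fst (colI cs))"
  by (simp add: colI_def)

lemma red_rel:
  "(\<forall>c\<in>set cs. c \<ge> 0) \<Longrightarrow> 5 dvd (red (fst (colZ cs)) - fst (colI cs)) \<and> 5 dvd (red (snd (colZ cs)) - snd (colI cs))"
proof (induction cs)
  case Nil
  then show ?case by (simp add: colZ_def colI_def)
next
  case (Cons c cs)
  obtain a b where ab: "colZ cs = (a, b)" by force
  obtain r s where rs: "colI cs = (r, s)" by force
  have c0: "c \<ge> 0" using Cons.prems by simp
  from Cons.IH Cons.prems ab rs have "5 dvd (red a - r)" "5 dvd (red b - s)" by auto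
  then obtain u v where u0: "red a - r = 5 * u" and v0: "red b - s = 5 * v" by (auto elim!: dvdE)
  from u0 v0 have u: "red a = r + 5 * u" and v: "red b = s + 5 * v" by auto
  obtain t1 where t1: "red (zmul (hZ (nat c)) a) = red (hZ (nat c)) * red a - 5 * t1" using red_mul by blast
  obtain t2 where t2: "red (zmul (pwZ (nat c + 4)) b) = red (pwZ (nat c + 4)) * red b - 5 * t2" using red_mul by blast
  have "int (nat c mod 5) = c mod 5" using c0 by (simp add: zmod_int)
  moreover have "c mod 5 = c + 5 * (- (c div 5))" using div_mult_mod_eq[of c 5] by linarith
  ultimately have m: "red (hZ (nat c)) = c + 5 * (- (c div 5))" unfolding red_h by simp
  obtain w where w0: "red (pwZ (nat c + 4)) - 1 = 5 * w" using red_pw[of "nat c + 4"]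
    by (auto elim!: dvdE)
  then have w: "red (pwZ (nat c + 4)) = 1 + 5 * w" by simp
  define m where "m = - (c div 5)"
  have f1: "red (fst (colZ (c#cs))) = red (hZ (nat c)) * red a - 5*t1 - (red (pwZ (nat c+4)) * red b - 5*t2)"
    by (simp add: colZ_cons ab stepZ_def red_add red_neg t1 t2)
  have f2: "fst (colI (c#cs)) = c * r - s" by (simp add: colI_cons rs)
  have e1: "red (fst (colZ (c#cs))) - fst (colI (c#cs)) =
     5 * ((c + 5*m) * u + m * r - t1 - w * s - (1 + 5*w) * v + t2)"
    unfolding f1 f2 m[folded m_def] w u v by (simp add: algebra_simps)
  have e2: "red (snd (colZ (c#cs))) - snd (colI (c#cs)) = 5 * u"
    by (simp add: colZ_cons colI_cons ab rs stepZ_def u)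
  show ?case unfolding e1 e2 by simp
qed

lemma colZ_orb: "colZ cs \<in> set orbL"
proof (induction cs)
  case Nil
  then show ?case using chk4 by (simp add: colZ_def)
next
  case (Cons c cs)
  have "\<forall>v\<in>set orbL. \<forall>k\<in>set [0..<5]. stepZ k v \<in> set orbL"
    using chk1 by (simp add: list_all_iff)
  then have "stepZ (nat c mod 5) (colZ cs) \<in> set orbL" using Cons by simp
  then show ?case by (simp add: colZ_cons stepZ_mod[of "nat c"])
qed

lemma orb_prop: "v \<in> set orbL \<Longrightarrow> (if jZ v = Z 0 0 0 0 then cnd v else (\<not> cnd v \<and> jZ v \<in> formZ ` set FL))"
  using chk2[unfolded list_all_iff set_map] by blast

lemma FL_mem: "k < 3 \<Longrightarrow> j < 5 \<Longrightarrow> (k, sg, j) \<in> set FL"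
proof -
  assume "k < 3" "j < 5"
  then have "k = 0 \<or> k = 1 \<or> k = 2" by linarith
  then show ?thesis using \<open>j < 5\<close> by (cases sg) (auto simp: FL_def)
qed

lemma FL_mem': "(k, sg, j) \<in> set FL \<Longrightarrow> k < 3 \<and> j < 5"
  by (auto simp: FL_def)

context rt5
begin

lemma z_ne0: "z \<noteq> 0" using z5 by auto

lemma emb_mZ: "emb z (mZ 0) = 1" "emb z (mZ 1) = z - 1" "emb z (mZ 2) = z^2 + 1"
  by (simp_all add: mZ_def)

lemma emb_form: "emb z (formZ (k, sg, j)) = (if sg then 1 else -1) * emb z (mZ k) * z^j"
  by (simp add: formZ_def emb_neg emb_mul' emb_pw)

end



theorem corollary3p10:
  fixes \<zeta> :: complex
  assumes "\<zeta> ^ 5 = 1" and "\<forall>k::nat. 0 < k \<and> k < 5 \<longrightarrow> \<zeta> ^ k \<noteq> 1"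
  shows "{Jones x \<zeta> | x. x > 1} =
           {0} \<union> {d. \<exists>c. (\<exists>j::nat. j < 5 \<and> (c = \<zeta> ^ j \<or> c = - (\<zeta> ^ j))) \<and>
                          (d = c \<or> d = (\<zeta> - 1) * c \<or> d = (\<zeta>\<^sup>2 + 1) * c)}
         \<and> (\<forall>r s :: int. s > 0 \<and> r > s \<and> coprime r s \<longrightarrow>
           (Jones (Fract r s) \<zeta> = 0 \<longleftrightarrow> 5 dvd r \<and> (s mod 5 = 2 \<or> s mod 5 = 3)))"
proof -
  have z1: "\<zeta> \<noteq> 1" using assms(2)[rule_format, of 1] by simp
  interpret rt5 \<zeta> by unfold_locales (use assms(1) z1 in auto)
  have z4ne: "\<zeta>^4 \<noteq> 1" using assms(2) by auto
  define T where "T = {d. \<exists>c. (\<exists>j::nat. j < 5 \<and> (c = \<zeta> ^ j \<or> c = - (\<zeta> ^ j))) \<and>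
                          (d = c \<or> d = (\<zeta> - 1) * c \<or> d = (\<zeta>\<^sup>2 + 1) * c)}"
  have z0: "emb \<zeta> (Z 0 0 0 0) = 0" by simp
  have mZne: "emb \<zeta> (mZ k) \<noteq> 0" if "k < 3" for k
  proof -
    have "k = 0 \<or> k = 1 \<or> k = 2" using that by linarith
    moreover have "\<zeta>^2 + 1 \<noteq> 0"
    proof
      assume "\<zeta>^2 + 1 = 0"
      then have "\<zeta>^2 = -1" by (simp add: add_eq_0_iff2)
      moreover have "\<zeta>^4 = \<zeta>^2 * \<zeta>^2" using power_add[of \<zeta> 2 2] by simp
      ultimately have "\<zeta>^4 = 1" by simp
      with z4ne show False by simp
    qed
    ultimately show ?thesis using z1 emb_mZ by auto
  qed
  have nz_form: "emb \<zeta> (formZ f) \<noteq> 0" if "f \<in> set FL" for f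
  proof -
    obtain k sg j where f: "f = (k, sg, j)" by (cases f) auto
    have "k < 3" using FL_mem' that f by blast
    then show ?thesis using mZne[of k] z_ne0 unfolding f emb_form by simp
  qed
  have in_T: "emb \<zeta> (formZ f) \<in> T" if "f \<in> set FL" for f
  proof -
    obtain k sg j where f: "f = (k, sg, j)" by (cases f) auto
    have kj: "k < 3" "j < 5" using FL_mem' that f by blast+
    define c where "c = (if sg then \<zeta>^j else - (\<zeta>^j))"
    have cj: "\<exists>j::nat. j < 5 \<and> (c = \<zeta> ^ j \<or> c = - (\<zeta> ^ j))" using kj c_def by auto
    have e: "emb \<zeta> (formZ f) = emb \<zeta> (mZ k) * c" unfolding f emb_form c_def by simp
    have "k = 0 \<or> k = 1 \<or> k = 2" using kj by linarith
    then show ?thesis unfolding T_def using cj e emb_mZ by (auto simp: mult.commute)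
  qed
  have T_form: "\<exists>f\<in>set FL. d = emb \<zeta> (formZ f)" if dT: "d \<in> T" for d
  proof -
    obtain c j where j: "j < 5" and c: "c = \<zeta> ^ j \<or> c = - (\<zeta> ^ j)"
      and d: "d = c \<or> d = (\<zeta> - 1) * c \<or> d = (\<zeta>\<^sup>2 + 1) * c"
      using dT unfolding T_def by blast
    obtain sg where sg: "c = (if sg then 1 else -1) * \<zeta>^j"
    proof (cases "c = \<zeta>^j")
      case True
      then show ?thesis using that[of True] by simp
    next
      case False
      then show ?thesis using that[of False] c by simp
    qed
    obtain k where k: "k < 3" "d = emb \<zeta> (mZ k) * c"
    proof -
      consider "d = c" | "d = (\<zeta> - 1) * c" | "d = (\<zeta>\<^sup>2 + 1) * c" using d by blast
      then show ?thesis
      proof cases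
        case 1 then show ?thesis using that[of 0] emb_mZ by simp
      next
        case 2 then show ?thesis using that[of 1] emb_mZ by simp
      next
        case 3 then show ?thesis using that[of 2] emb_mZ by simp
      qed
    qed
    have "d = emb \<zeta> (formZ (k, sg, j))" unfolding emb_form k(2) sg by (simp add: mult.assoc mult.commute)
    then show ?thesis using FL_mem[OF k(1) j] by blast
  qed
  have part1: "{Jones x \<zeta> | x. x > 1} = {0} \<union> T"
  proof (intro equalityI subsetI)
    fix d assume "d \<in> {Jones x \<zeta> | x. x > 1}"
    then obtain x where d: "d = Jones x \<zeta>" by blast
    define v where "v = colZ (ncf x)"
    have v: "v \<in> set orbL" unfolding v_def by (rule colZ_orb)
    have dv: "d = emb \<zeta> (jZ v)" unfolding d v_def by (rule Jones_emb)
    show "d \<in> {0} \<union> T"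
    proof (cases "jZ v = Z 0 0 0 0")
      case True
      then show ?thesis using dv by simp
    next
      case False
      then have "jZ v \<in> formZ ` set FL" using orb_prop[OF v] by simp
      then show ?thesis using dv in_T by auto
    qed
  next
    fix d assume d: "d \<in> {0} \<union> T"
    show "d \<in> {Jones x \<zeta> | x. x > 1}"
    proof (cases "d = 0")
      case True
      have v: "valid [3,2]" by (simp add: valid_def)
      have "Jones (ncf_val [3,2]) \<zeta> = 0"
        unfolding Jones_emb ncf_eq[OF v] using chk4 by simp
      then show ?thesis using True gt1[OF v] by (intro CollectI exI[of _ "ncf_val [3,2]"]) simp
    next
      case False
      then have "d \<in> T" using d by simp
      then obtain f where f: "f \<in> set FL" "d = emb \<zeta> (formZ f)" using T_form by blast
      have "set FL = fst ` set witL" using chk3 by (metis list.set_map)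
      then obtain cs where fc: "(f, cs) \<in> set witL" using f(1) by force
      have w: "cs \<noteq> [] \<and> list_all (\<lambda>c. c \<ge> 2) cs \<and> jZ (colZ cs) = formZ f"
        using chk3 fc unfolding list_all_iff by fastforce
      then have v: "valid cs" by (simp add: valid_def list_all_iff)
      have "Jones (ncf_val cs) \<zeta> = d"
        unfolding Jones_emb ncf_eq[OF v] using w f by simp
      then show ?thesis using gt1[OF v] by (intro CollectI exI[of _ "ncf_val cs"]) simp
    qed
  qed
  have part2: "Jones (Fract r s) \<zeta> = 0 \<longleftrightarrow> 5 dvd r \<and> (s mod 5 = 2 \<or> s mod 5 = 3)"
    if rs: "s > 0" "r > s" "coprime r s" for r s :: int
  proof -
    define x where "x = Fract r s"
    have xq: "x = of_int r / of_int s" unfolding x_def by (simp add: Fract_of_int_quotient)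
    have x1: "x > 1" using rs unfolding xq by simp
    define cs where "cs = ncf x"
    have cs: "valid cs" "ncf_val cs = x" using ncf_spec[OF x1] cs_def by auto
    obtain r' s' where rs': "colI cs = (r', s')" by force
    have p: "s' > 0" "r' > s'" "coprime r' s'" "ncf_val cs = of_int r' / of_int s'"
      using colI_props[OF cs(1)] rs' by auto
    have "Fract r' s' = Fract r s" using p(4) cs(2) unfolding x_def by (simp add: Fract_of_int_quotient)
    then have "quotient_of (Fract r' s') = quotient_of (Fract r s)" by simp
    then have eq: "r' = r" "s' = s" using p rs by (simp_all add: quotient_of_Fract normalize_stable)
    define v where "v = colZ cs"
    have v: "v \<in> set orbL" unfolding v_def by (rule colZ_orb)
    have J: "Jones (Fract r s) \<zeta> = emb \<zeta> (jZ v)" unfolding v_def cs_def x_def[symmetric] by (rule Jones_emb)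
    have "\<forall>c\<in>set cs. c \<ge> 0" using cs(1) by (auto simp: valid_def)
    from red_rel[OF this] rs' eq have rr: "5 dvd (red (fst v) - r)" "5 dvd (red (snd v) - s)"
      unfolding v_def by auto
    have m: "red (fst v) mod 5 = r mod 5" "red (snd v) mod 5 = s mod 5"
      using rr by (simp_all add: mod_eq_dvd_iff)
    have cndeq: "cnd v \<longleftrightarrow> 5 dvd r \<and> (s mod 5 = 2 \<or> s mod 5 = 3)"
      unfolding cnd_def m by (simp add: dvd_eq_mod_eq_0)
    show ?thesis
    proof (cases "jZ v = Z 0 0 0 0")
      case True
      then show ?thesis using orb_prop[OF v] J cndeq by simp
    next
      case False
      then have "\<not> cnd v" "jZ v \<in> formZ ` set FL" using orb_prop[OF v] by auto
      then show ?thesis using J cndeq nz_form by auto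
    qed
  qed
  show ?thesis using part1 part2 unfolding T_def by blast
qed


end
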